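(* Let $\mathcal{G}_s$ be a connected signed graph on nodes $\{1,\dots,n\}$ with symmetric real weight matrix $W$ (entries may be negative), signed adjacency matrix $A_s$ ($[A_s]_{ij}=W_{ij}$ for neighbours $i,j$, zero otherwise), signed degree matrix $D_s=\mathrm{diag}\big(\sum_{j}|[A_s]_{ij}|\big)$ and signed Laplacian $L_s=D_s-A_s$. Take node $n$ as the single input node and partition $$L_s=\begin{bmatrix}A_s^f & B_s^f\\ (B_s^f)^T & a_s\end{bmatrix},\qquad A_s^f\in\mathbb{R}^{(n-1)\times(n-1)},\ B_s^f\in\mathbb{R}^{n-1}.$$ Assume $\mathcal{G}_s$ is structurally balanced, i.e. there is a gauge transformation $G_t=\mathrm{diag}(\sigma_1,\dots,\sigma_n)$, $\sigma_i\in\{\pm1\}$, such that $G_tA_sG_t$ has nonnegative entries, and let $L=G_tL_sG_t$ be the Laplacian of the underlying unsigned graph $\mathcal{G}$ (weights $|W_{ij}|$). Assume $\mathcal{G}$ is input symmetric: there is a permutation matrix $\Pi\neq I$ with $\Pi L=L\Pi$ that fixes the input node $n$. Then there exists a matrix $J'\neq I$ such that (1) $J'A_s^f=A_s^fJ'$; (2) $J'^TB_s^f=B_s^f$; (3) whenever $A_s^fv=\lambda v$, also $A_s^f(J'v)=\lambda J'v$ and $A_s^f(v-J'v)=\lambda(v-J'v)$.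
   Context: A gauge transformation is a diagonal matrix with diagonal entries $\pm1$; it satisfies $G_t=G_t^T=G_t^{-1}$. For a structurally balanced signed graph, $G_tL_sG_t$ equals the (unsigned) Laplacian of the graph with edge weights $|W_{ij}|$. A permutation matrix $\Pi$ commuting with the unsigned adjacency matrix (equivalently with $L$) corresponds to a (weight-preserving) graph automorphism; "fixing node $n$" means $\Pi e_n=e_n$. *)

theory Defs
  imports Complex_Main
begin

text \<open>Matrices are functions nat => nat => real, used only on an explicit index
  range {1..m}. Nodes of the graph are 1..n; node n is the input node.\<close>

definition mmul :: "nat \<Rightarrow> (nat \<Rightarrow> nat \<Rightarrow> real) \<Rightarrow> (nat \<Rightarrow> nat \<Rightarrow> real) \<Rightarrow> (nat \<Rightarrow> nat \<Rightarrow> real)" where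
  "mmul m X Y = (\<lambda>i j. \<Sum>k\<in>{1..m}. X i k * Y k j)"

definition mvec :: "nat \<Rightarrow> (nat \<Rightarrow> nat \<Rightarrow> real) \<Rightarrow> (nat \<Rightarrow> real) \<Rightarrow> (nat \<Rightarrow> real)" where
  "mvec m X v = (\<lambda>i. \<Sum>k\<in>{1..m}. X i k * v k)"

definition mtrans :: "(nat \<Rightarrow> nat \<Rightarrow> real) \<Rightarrow> (nat \<Rightarrow> nat \<Rightarrow> real)" where
  "mtrans X = (\<lambda>i j. X j i)"

definition idm :: "nat \<Rightarrow> nat \<Rightarrow> real" where
  "idm = (\<lambda>i j. if i = j then 1 else 0)"

definition meq :: "nat \<Rightarrow> (nat \<Rightarrow> nat \<Rightarrow> real) \<Rightarrow> (nat \<Rightarrow> nat \<Rightarrow> real) \<Rightarrow> bool" where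
  "meq m X Y \<longleftrightarrow> (\<forall>i\<in>{1..m}. \<forall>j\<in>{1..m}. X i j = Y i j)"

definition veq :: "nat \<Rightarrow> (nat \<Rightarrow> real) \<Rightarrow> (nat \<Rightarrow> real) \<Rightarrow> bool" where
  "veq m u v \<longleftrightarrow> (\<forall>i\<in>{1..m}. u i = v i)"

definition is_graph :: "nat \<Rightarrow> (nat \<Rightarrow> nat \<Rightarrow> bool) \<Rightarrow> bool" where
  "is_graph n E \<longleftrightarrow> (\<forall>i j. E i j \<longrightarrow> i \<in> {1..n} \<and> j \<in> {1..n} \<and> i \<noteq> j \<and> E j i)"

definition connected_graph :: "nat \<Rightarrow> (nat \<Rightarrow> nat \<Rightarrow> bool) \<Rightarrow> bool" where
  "connected_graph n E \<longleftrightarrow> (\<forall>i\<in>{1..n}. \<forall>j\<in>{1..n}. E\<^sup>*\<^sup>* i j)"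

definition signed_adj :: "(nat \<Rightarrow> nat \<Rightarrow> bool) \<Rightarrow> (nat \<Rightarrow> nat \<Rightarrow> real) \<Rightarrow> (nat \<Rightarrow> nat \<Rightarrow> real)" where
  "signed_adj E W = (\<lambda>i j. if E i j then W i j else 0)"

definition signed_deg :: "nat \<Rightarrow> (nat \<Rightarrow> nat \<Rightarrow> real) \<Rightarrow> (nat \<Rightarrow> nat \<Rightarrow> real)" where
  "signed_deg n A = (\<lambda>i j. if i = j then (\<Sum>k\<in>{1..n}. \<bar>A i k\<bar>) else 0)"

definition signed_lap :: "nat \<Rightarrow> (nat \<Rightarrow> nat \<Rightarrow> real) \<Rightarrow> (nat \<Rightarrow> nat \<Rightarrow> real)" where
  "signed_lap n A = (\<lambda>i j. signed_deg n A i j - A i j)"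

definition gauge :: "nat \<Rightarrow> (nat \<Rightarrow> real) \<Rightarrow> (nat \<Rightarrow> nat \<Rightarrow> real)" where
  "gauge n \<sigma> = (\<lambda>i j. if i = j \<and> i \<in> {1..n} then \<sigma> i else 0)"

definition is_gauge_signs :: "nat \<Rightarrow> (nat \<Rightarrow> real) \<Rightarrow> bool" where
  "is_gauge_signs n \<sigma> \<longleftrightarrow> (\<forall>i\<in>{1..n}. \<sigma> i = 1 \<or> \<sigma> i = -1)"

text \<open>Permutation matrix of a permutation p of {1..n}: column j has its 1 in row p j,
  so that the matrix maps e_j to e_(p j).\<close>
definition perm_mat :: "(nat \<Rightarrow> nat) \<Rightarrow> (nat \<Rightarrow> nat \<Rightarrow> real)" where
  "perm_mat p = (\<lambda>i j. if i = p j then 1 else 0)"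

end

theory Submission
  imports Defs
begin

lemma gauge_left:
  assumes "i \<in> {1..n}"
  shows "mmul n (gauge n \<sigma>) X i j = \<sigma> i * X i j"
proof -
  have "mmul n (gauge n \<sigma>) X i j = (\<Sum>k\<in>{1..n}. if k = i then \<sigma> i * X i j else 0)"
    unfolding mmul_def gauge_def by (rule sum.cong) (auto simp: assms)
  also have "\<dots> = \<sigma> i * X i j" using assms by simp
  finally show ?thesis .
qed

lemma gauge_right:
  assumes "j \<in> {1..n}"
  shows "mmul n X (gauge n \<sigma>) i j = X i j * \<sigma> j"
proof -
  have "mmul n X (gauge n \<sigma>) i j = (\<Sum>k\<in>{1..n}. if k = j then X i j * \<sigma> j else 0)"
    unfolding mmul_def gauge_def by (rule sum.cong) (auto simp: assms)
  also have "\<dots> = X i j * \<sigma> j" using assms by simp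
  finally show ?thesis .
qed

lemma gauge_both:
  assumes "i \<in> {1..n}" "j \<in> {1..n}"
  shows "mmul n (mmul n (gauge n \<sigma>) X) (gauge n \<sigma>) i j = \<sigma> i * X i j * \<sigma> j"
  using assms by (simp add: gauge_right gauge_left)

lemma perm_left:
  assumes "inj_on p {1..n}" "a \<in> {1..n}"
  shows "mmul n (perm_mat p) Y (p a) j = Y a j"
proof -
  have "mmul n (perm_mat p) Y (p a) j = (\<Sum>k\<in>{1..n}. if k = a then Y a j else 0)"
    unfolding mmul_def perm_mat_def
    by (rule sum.cong) (use assms in \<open>auto dest: inj_onD\<close>)
  also have "\<dots> = Y a j" using assms by simp
  finally show ?thesis .
qed

lemma perm_right:
  assumes "j \<in> {1..n}" "p j \<in> {1..n}"
  shows "mmul n Y (perm_mat p) i j = Y i (p j)"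
proof -
  have "mmul n Y (perm_mat p) i j = (\<Sum>k\<in>{1..n}. if k = p j then Y i (p j) else 0)"
    unfolding mmul_def perm_mat_def by (rule sum.cong) auto
  also have "\<dots> = Y i (p j)" using assms by simp
  finally show ?thesis .
qed

lemma mvec_mmul: "mvec m X (mvec m Y v) = mvec m (mmul m X Y) v"
  unfolding mvec_def mmul_def
  apply (rule ext)
  apply (simp add: sum_distrib_left sum_distrib_right mult.assoc)
  by (rule sum.swap)

lemma mvec_meq:
  assumes "meq m X Y" "i \<in> {1..m}"
  shows "mvec m X v i = mvec m Y v i"
  using assms unfolding mvec_def meq_def by (intro sum.cong) auto

lemma mvec_veq:
  assumes "veq m u w"
  shows "mvec m X u i = mvec m X w i"
  using assms unfolding mvec_def veq_def by (intro sum.cong) auto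

lemma mvec_scale: "mvec m X (\<lambda>i. c * v i) i = c * mvec m X v i"
  unfolding mvec_def by (simp add: sum_distrib_left mult.left_commute)

lemma mvec_diff: "mvec m X (\<lambda>i. u i - w i) i = mvec m X u i - mvec m X w i"
  unfolding mvec_def by (simp add: right_diff_distrib sum_subtractf)

theorem lemma2:
  fixes n :: nat and E :: "nat \<Rightarrow> nat \<Rightarrow> bool" and W :: "nat \<Rightarrow> nat \<Rightarrow> real"
    and \<sigma> :: "nat \<Rightarrow> real" and p :: "nat \<Rightarrow> nat"
  assumes graph: "is_graph n E"
    and conn: "connected_graph n E"
    and Wsym: "\<forall>i\<in>{1..n}. \<forall>j\<in>{1..n}. W i j = W j i"
    and signs: "is_gauge_signs n \<sigma>"
    and balanced: "\<forall>i\<in>{1..n}. \<forall>j\<in>{1..n}.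
        mmul n (mmul n (gauge n \<sigma>) (signed_adj E W)) (gauge n \<sigma>) i j \<ge> 0"
    and perm: "bij_betw p {1..n} {1..n}"
    and Pi_ne_I: "\<not> meq n (perm_mat p) idm"
    and fixes_input: "p n = n"
    and commute: "meq n
        (mmul n (perm_mat p) (mmul n (mmul n (gauge n \<sigma>) (signed_lap n (signed_adj E W))) (gauge n \<sigma>)))
        (mmul n (mmul n (mmul n (gauge n \<sigma>) (signed_lap n (signed_adj E W))) (gauge n \<sigma>)) (perm_mat p))"
  shows "\<exists>J :: nat \<Rightarrow> nat \<Rightarrow> real.
    (let Ls = signed_lap n (signed_adj E W);
         Af = Ls;
         Bf = (\<lambda>i. Ls i n)
     in \<not> meq (n - 1) J idm
      \<and> meq (n - 1) (mmul (n - 1) J Af) (mmul (n - 1) Af J)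
      \<and> veq (n - 1) (mvec (n - 1) (mtrans J) Bf) Bf
      \<and> (\<forall>(v :: nat \<Rightarrow> real) (lam :: real). veq (n - 1) (mvec (n - 1) Af v) (\<lambda>i. lam * v i) \<longrightarrow>
            veq (n - 1) (mvec (n - 1) Af (mvec (n - 1) J v)) (\<lambda>i. lam * mvec (n - 1) J v i)
          \<and> veq (n - 1) (mvec (n - 1) Af (\<lambda>i. v i - mvec (n - 1) J v i))
                (\<lambda>i. lam * (v i - mvec (n - 1) J v i))))"
proof -
  define Ls where "Ls = signed_lap n (signed_adj E W)"
  define m where "m = n - 1"
  define J where "J = (\<lambda>i j. if i = p j then \<sigma> i * \<sigma> j else (0::real))"
  have inj: "inj_on p {1..n}" using perm by (simp add: bij_betw_def)
  have pin: "p a \<in> {1..n}" if "a \<in> {1..n}" for a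
    using perm that by (auto simp: bij_betw_def)
  have sq: "\<sigma> a * \<sigma> a = 1" if "a \<in> {1..n}" for a
    using signs that unfolding is_gauge_signs_def by force
  have mn: "{1..m} \<subseteq> {1..n}" "n \<notin> {1..m}" unfolding m_def by auto
  have pim: "p a \<in> {1..m}" if "a \<in> {1..m}" for a
  proof -
    have a: "a \<in> {1..n}" "a \<noteq> n" using that mn by auto
    have "p a \<noteq> p n" using inj a by (auto dest: inj_onD)
    then show ?thesis using pin[OF a(1)] fixes_input unfolding m_def by auto
  qed
  have surjm: "\<exists>a\<in>{1..m}. p a = i" if "i \<in> {1..m}" for i
  proof -
    have "i \<in> p ` {1..n}" using perm that mn by (auto simp: bij_betw_def)
    then obtain a where a: "a \<in> {1..n}" "p a = i" by auto
    have "a \<noteq> n" using a fixes_input that mn by auto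
    then show ?thesis using a unfolding m_def by auto
  qed
  have key: "\<sigma> a * Ls a j * \<sigma> j = \<sigma> (p a) * Ls (p a) (p j) * \<sigma> (p j)"
    if "a \<in> {1..n}" "j \<in> {1..n}" for a j
  proof -
    have "mmul n (perm_mat p) (mmul n (mmul n (gauge n \<sigma>) Ls) (gauge n \<sigma>)) (p a) j
       = mmul n (mmul n (mmul n (gauge n \<sigma>) Ls) (gauge n \<sigma>)) (perm_mat p) (p a) j"
      using commute pin[OF that(1)] that(2) unfolding meq_def Ls_def by blast
    then show ?thesis
      using that pin by (simp add: perm_left[OF inj] perm_right gauge_both)
  qed
  have key2: "Ls a j = \<sigma> a * \<sigma> j * (\<sigma> (p a) * Ls (p a) (p j) * \<sigma> (p j))"
    if "a \<in> {1..n}" "j \<in> {1..n}" for a j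
  proof -
    have "\<sigma> a * \<sigma> j * (\<sigma> a * Ls a j * \<sigma> j) = (\<sigma> a * \<sigma> a) * (\<sigma> j * \<sigma> j) * Ls a j"
      by (simp add: algebra_simps)
    then have "\<sigma> a * \<sigma> j * (\<sigma> a * Ls a j * \<sigma> j) = Ls a j" using sq[OF that(1)] sq[OF that(2)] by simp
    then show ?thesis using key[OF that] by simp
  qed
  have comm: "meq m (mmul m J Ls) (mmul m Ls J)"
    unfolding meq_def
  proof (intro ballI)
    fix i j assume i: "i \<in> {1..m}" and j: "j \<in> {1..m}"
    obtain a where a: "a \<in> {1..m}" "p a = i" using surjm[OF i] by blast
    have injm: "inj_on p {1..m}" using inj mn(1) by (rule inj_on_subset)
    have "mmul m J Ls i j = (\<Sum>k\<in>{1..m}. if k = a then \<sigma> i * \<sigma> a * Ls a j else 0)"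
      unfolding mmul_def J_def by (rule sum.cong) (use a injm in \<open>auto dest: inj_onD\<close>)
    also have "\<dots> = \<sigma> i * \<sigma> a * Ls a j" using a by simp
    finally have l: "mmul m J Ls i j = \<sigma> i * \<sigma> a * Ls a j" .
    have "mmul m Ls J i j = (\<Sum>k\<in>{1..m}. if k = p j then Ls i (p j) * (\<sigma> (p j) * \<sigma> j) else 0)"
      unfolding mmul_def J_def by (rule sum.cong) auto
    also have "\<dots> = Ls i (p j) * (\<sigma> (p j) * \<sigma> j)" using pim[OF j] by simp
    finally have r: "mmul m Ls J i j = Ls i (p j) * (\<sigma> (p j) * \<sigma> j)" .
    have an: "a \<in> {1..n}" "j \<in> {1..n}" using a j mn by auto
    have "\<sigma> i * \<sigma> a * Ls a j = \<sigma> i * \<sigma> a * (\<sigma> a * \<sigma> j * (\<sigma> i * Ls i (p j) * \<sigma> (p j)))"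
      using key2[OF an] a by simp
    also have "\<dots> = (\<sigma> i * \<sigma> i) * (\<sigma> a * \<sigma> a) * Ls i (p j) * (\<sigma> (p j) * \<sigma> j)"
      by (simp add: algebra_simps)
    also have "\<dots> = Ls i (p j) * (\<sigma> (p j) * \<sigma> j)"
    proof -
      have "i \<in> {1..n}" using i mn(1) by blast
      then show ?thesis using sq[OF an(1)] sq[of i] by simp
    qed
    finally show "mmul m J Ls i j = mmul m Ls J i j" using l r by simp
  qed
  have bf: "veq m (mvec m (mtrans J) (\<lambda>i. Ls i n)) (\<lambda>i. Ls i n)"
    unfolding veq_def
  proof
    fix i assume i: "i \<in> {1..m}"
    have "mvec m (mtrans J) (\<lambda>i. Ls i n) i
        = (\<Sum>k\<in>{1..m}. if k = p i then \<sigma> (p i) * \<sigma> i * Ls (p i) n else 0)"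
      unfolding mvec_def mtrans_def J_def by (rule sum.cong) auto
    also have "\<dots> = \<sigma> (p i) * \<sigma> i * Ls (p i) n" using pim[OF i] by simp
    also have "\<dots> = Ls i n"
    proof -
      have in1: "i \<in> {1..n}" "n \<in> {1..n}" using i mn m_def by auto
      have "n \<ge> 1" using i m_def by auto
      hence nn: "n \<in> {1..n}" by auto
      have "Ls i n = \<sigma> i * \<sigma> n * (\<sigma> (p i) * Ls (p i) n * \<sigma> n)"
        using key2[OF in1(1) nn] fixes_input by simp
      also have "\<dots> = (\<sigma> n * \<sigma> n) * (\<sigma> (p i) * \<sigma> i * Ls (p i) n)"
        by (simp add: algebra_simps)
      finally show ?thesis using sq[OF nn] by simp
    qed
    finally show "mvec m (mtrans J) (\<lambda>i. Ls i n) i = Ls i n" .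
  qed
  have notI: "\<not> meq m J idm"
  proof
    assume h: "meq m J idm"
    obtain i j where ij: "i \<in> {1..n}" "j \<in> {1..n}" "perm_mat p i j \<noteq> idm i j"
      using Pi_ne_I unfolding meq_def by blast
    have pj: "p j \<noteq> j" using ij(3) unfolding perm_mat_def idm_def by (auto split: if_splits)
    have "j \<noteq> n" using pj fixes_input by auto
    hence jm: "j \<in> {1..m}" using ij unfolding m_def by auto
    have "J (p j) j = idm (p j) j" using h pim[OF jm] jm unfolding meq_def by blast
    moreover have "J (p j) j \<noteq> 0" using sq[of "p j"] sq[of j] pin ij(2) unfolding J_def
      by (auto simp: mult_eq_0_iff)
    ultimately show False using pj unfolding idm_def by simp
  qed
  have eig: "veq m (mvec m Ls (mvec m J v)) (\<lambda>i. lam * mvec m J v i)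
          \<and> veq m (mvec m Ls (\<lambda>i. v i - mvec m J v i)) (\<lambda>i. lam * (v i - mvec m J v i))"
    if hv: "veq m (mvec m Ls v) (\<lambda>i. lam * v i)" for v lam
  proof -
    have e1: "mvec m Ls (mvec m J v) i = lam * mvec m J v i" if i: "i \<in> {1..m}" for i
    proof -
      have "mvec m Ls (mvec m J v) i = mvec m (mmul m Ls J) v i" by (simp add: mvec_mmul)
      also have "\<dots> = mvec m (mmul m J Ls) v i"
        using mvec_meq[OF comm i] by simp
      also have "\<dots> = mvec m J (mvec m Ls v) i" by (simp add: mvec_mmul)
      also have "\<dots> = mvec m J (\<lambda>i. lam * v i) i" by (rule mvec_veq[OF hv])
      also have "\<dots> = lam * mvec m J v i" by (rule mvec_scale)
      finally show ?thesis .
    qed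
    have e2: "mvec m Ls (\<lambda>i. v i - mvec m J v i) i = lam * (v i - mvec m J v i)"
      if i: "i \<in> {1..m}" for i
      using e1[OF i] hv i unfolding veq_def by (simp add: mvec_diff right_diff_distrib)
    show ?thesis unfolding veq_def using e1 e2 by blast
  qed
  show ?thesis
    apply (rule exI[of _ J])
    unfolding Let_def Ls_def[symmetric] m_def[symmetric]
    using notI comm bf eig by blast
qed

end
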